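(* 1. $K_0=\mathbb X$. 2. $K_{\nu_2}\subset K_{\nu_1}$ whenever $0\le\nu_1\le\nu_2$. 3. For every $\nu>1$, $K_\nu=\operatorname{argmin}_{z\in\mathbb X}\mathcal R(z)+\ker(A)$. 4. $\mathrm{dom}(\mathcal R)+\ker(A)\subset K_{1/2}$.
   Context: Standing setting: $\mathbb X$ real Banach space, $\tau$ a topology with $(\mathbb X,\tau)$ locally convex Hausdorff; $\mathcal R:\mathbb X\to(-\infty,\infty]$ proper convex with $\tau$-compact sublevel sets $\{\mathcal R\le\lambda\}$, $\lambda\in\mathbb R$; $\mathbb Y$ real Hilbert space; $A:\mathbb X\to\mathbb Y$ linear, $\tau$-to-weak continuous. $T_\alpha(x,g):=\frac1{2\alpha}\|g-Ax\|_{\mathbb Y}^2+\mathcal R(x)$, $R_\alpha(g):=\operatorname{argmin}_{x\in\mathrm{dom}(\mathcal R)}T_\alpha(x,g)$. For $\nu\ge0$, $\varrho_\nu(x):=\sup\{\alpha^{-\nu}\|Ax-Ax_\alpha\|_{\mathbb Y}:\alpha>0,x_\alpha\in R_\alpha(Ax)\}\in[0,\infty]$ and $K_\nu:=\{x\in\mathbb X:\varrho_\nu(x)<\infty\}$. *)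

theory Defs
  imports "HOL-Analysis.Analysis"
begin

definition locally_convex_Hausdorff :: "'a::real_vector topology \<Rightarrow> bool" where
  "locally_convex_Hausdorff tau \<longleftrightarrow>
     topspace tau = UNIV \<and> Hausdorff_space tau \<and>
     continuous_map (prod_topology tau tau) tau (\<lambda>(x, y). x + y) \<and>
     continuous_map (prod_topology euclideanreal tau) tau (\<lambda>(c, x). c *\<^sub>R x) \<and>
     (\<forall>U x. openin tau U \<and> x \<in> U \<longrightarrow> (\<exists>V. openin tau V \<and> convex V \<and> x \<in> V \<and> V \<subseteq> U))"

definition weak_topology :: "'b::real_inner topology" where
  "weak_topology = topology_generated_by {{y. z \<bullet> y \<in> U} | z U. open U}"

definition edom :: "('a \<Rightarrow> ereal) \<Rightarrow> 'a set" where
  "edom R = {x. R x < \<infinity>}"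

definition proper_convex :: "('a::real_vector \<Rightarrow> ereal) \<Rightarrow> bool" where
  "proper_convex R \<longleftrightarrow> (\<forall>x. R x \<noteq> -\<infinity>) \<and> (\<exists>x. R x \<noteq> \<infinity>) \<and>
     (\<forall>x y t. 0 \<le> t \<and> t \<le> 1 \<longrightarrow>
        R ((1 - t) *\<^sub>R x + t *\<^sub>R y) \<le> ereal (1 - t) * R x + ereal t * R y)"

definition Tik :: "('a \<Rightarrow> 'b::real_normed_vector) \<Rightarrow> ('a \<Rightarrow> ereal) \<Rightarrow> real \<Rightarrow> 'a \<Rightarrow> 'b \<Rightarrow> ereal" where
  "Tik A R \<alpha> x g = ereal (1 / (2 * \<alpha>) * (norm (g - A x))\<^sup>2) + R x"

definition Ralpha :: "('a \<Rightarrow> 'b::real_normed_vector) \<Rightarrow> ('a \<Rightarrow> ereal) \<Rightarrow> real \<Rightarrow> 'b \<Rightarrow> 'a set" where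
  "Ralpha A R \<alpha> g = {x \<in> edom R. \<forall>z \<in> edom R. Tik A R \<alpha> x g \<le> Tik A R \<alpha> z g}"

definition rho :: "('a \<Rightarrow> 'b::real_normed_vector) \<Rightarrow> ('a \<Rightarrow> ereal) \<Rightarrow> real \<Rightarrow> 'a \<Rightarrow> ennreal" where
  "rho A R \<nu> x = Sup {ennreal (\<alpha> powr (-\<nu>) * norm (A x - A xa)) | \<alpha> xa. \<alpha> > 0 \<and> xa \<in> Ralpha A R \<alpha> (A x)}"

definition Kset :: "('a \<Rightarrow> 'b::real_normed_vector) \<Rightarrow> ('a \<Rightarrow> ereal) \<Rightarrow> real \<Rightarrow> 'a set" where
  "Kset A R \<nu> = {x. rho A R \<nu> x < \<infinity>}"

definition argminR :: "('a \<Rightarrow> ereal) \<Rightarrow> 'a set" where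
  "argminR R = {z. \<forall>w. R z \<le> R w}"

definition kerA :: "('a \<Rightarrow> 'b::zero) \<Rightarrow> 'a set" where
  "kerA A = {k. A k = 0}"

end

theory Submission
  imports Defs
begin



lemma cluster_point:
  fixes y :: "nat \<Rightarrow> 'a"
  assumes K: "compactin X K" and y: "\<And>n. y n \<in> K"
  shows "\<exists>m\<in>K. \<forall>U. openin X U \<and> m \<in> U \<longrightarrow> (\<forall>N. \<exists>n\<ge>N. y n \<in> U)"
proof -
  define \<U> where "\<U> = (\<lambda>N. X closure_of (y ` {N..})) ` UNIV"
  have sub: "y ` {N..} \<subseteq> topspace X" for N
    using y compactin_subset_topspace[OF K] by blast
  have "K \<inter> \<Inter>\<U> \<noteq> {}"
  proof -
    have "(\<forall>C\<in>\<U>. closedin X C)" by (auto simp: \<U>_def)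
    moreover have "K \<inter> \<Inter>\<F> \<noteq> {}" if "finite \<F>" "\<F> \<subseteq> \<U>" for \<F>
    proof -
      have "\<forall>F\<in>\<F>. \<exists>N. F = X closure_of (y ` {N..})" using that(2) by (auto simp: \<U>_def)
      then obtain Nf where Nf: "\<And>F. F \<in> \<F> \<Longrightarrow> F = X closure_of (y ` {Nf F..})" by metis
      define M where "M = Max (Nf ` \<F>)"
      have "y M \<in> F" if "F \<in> \<F>" for F
      proof -
        have "Nf F \<le> M" unfolding M_def using \<open>finite \<F>\<close> that by auto
        then have "y M \<in> y ` {Nf F..}" by auto
        then show ?thesis using closure_of_subset[OF sub] Nf[OF that] by blast
      qed
      then show ?thesis using y[of M] by blast
    qed
    ultimately show ?thesis using K unfolding compactin_fip by blast
  qed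
  then obtain m where m: "m \<in> K" "m \<in> \<Inter>\<U>" by blast
  show ?thesis
  proof (intro bexI[OF _ m(1)] allI impI)
    fix U N assume "openin X U \<and> m \<in> U"
    moreover have "m \<in> X closure_of (y ` {N..})" using m(2) by (auto simp: \<U>_def)
    ultimately show "\<exists>n\<ge>N. y n \<in> U" unfolding in_closure_of by blast
  qed
qed

lemma weak_open_norm_gt:
  fixes y0 :: "'b::real_inner"
  shows "openin weak_topology {w. r < norm (y0 - w)}"
proof (cases "r < 0")
  case True
  have "{w::'b. r < norm (y0 - w)} = {w. (0::'b) \<bullet> w \<in> UNIV}" using True
    by (auto intro: less_le_trans[of r 0])
  also have "openin weak_topology \<dots>" unfolding weak_topology_def
    by (rule topology_generated_by_Basis) blast
  finally show ?thesis .
next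
  case False
  show ?thesis
  proof (subst openin_subopen, intro ballI)
    fix w assume w: "w \<in> {w. r < norm (y0 - w)}"
    define z where "z = w - y0"
    define T where "T = {v. z \<bullet> v \<in> {t. z \<bullet> y0 + r * norm z < t}}"
    have "openin weak_topology T" unfolding weak_topology_def T_def
      by (rule topology_generated_by_Basis) (auto intro!: exI[of _ z] exI[of _ "{t. z \<bullet> y0 + r * norm z < t}"] open_greaterThan[unfolded greaterThan_def])
    moreover have "w \<in> T"
    proof -
      have nz: "norm z > r" using w by (simp add: z_def norm_minus_commute)
      have "z \<bullet> w - z \<bullet> y0 = norm z ^ 2" by (simp add: z_def power2_norm_eq_inner inner_diff_right)
      moreover have "r * norm z < norm z * norm z" using nz False
        by (intro mult_strict_right_mono) auto
      ultimately show ?thesis unfolding T_def by (simp add: power2_eq_square)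
    qed
    moreover have "T \<subseteq> {w. r < norm (y0 - w)}"
    proof
      fix v assume "v \<in> T"
      then have h: "r * norm z < z \<bullet> (v - y0)" by (simp add: T_def inner_diff_right)
      also have "\<dots> \<le> norm z * norm (v - y0)" using norm_cauchy_schwarz by blast
      finally have "r * norm z < norm z * norm (v - y0)" .
      then have "r < norm (v - y0)" using False
        by (metis mult.commute mult_le_cancel_right norm_ge_zero not_le)
      then show "v \<in> {w. r < norm (y0 - w)}" by (simp add: norm_minus_commute)
    qed
    ultimately show "\<exists>T. openin weak_topology T \<and> w \<in> T \<and> T \<subseteq> {w. r < norm (y0 - w)}" by blast
  qed
qed




locale setting =
  fixes tau :: "'a::banach topology" and R :: "'a \<Rightarrow> ereal"
    and A :: "'a \<Rightarrow> 'b::{real_inner, complete_space}"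
  assumes lch: "locally_convex_Hausdorff tau" and pc: "proper_convex R"
    and cpt: "\<And>c::real. compactin tau {x. R x \<le> ereal c}"
    and lin: "linear A" and cont: "continuous_map tau weak_topology A"
begin

lemma top: "topspace tau = UNIV" using lch by (simp add: locally_convex_Hausdorff_def)

lemma closedR: "closedin tau {x. R x \<le> ereal c}"
  using lch cpt compactin_imp_closedin by (auto simp: locally_convex_Hausdorff_def)

lemma openR: "openin tau {x. ereal c < R x}"
proof -
  have "{x. ereal c < R x} = topspace tau - {x. R x \<le> ereal c}" by (auto simp: top not_le)
  then show ?thesis using closedR by (simp add: openin_diff)
qed

lemma openN: "openin tau {x. r < norm (g - A x)}"
  using openin_continuous_map_preimage[OF cont weak_open_norm_gt[of r g]] by (simp add: top)

lemma openSq: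
  assumes "\<alpha> > 0"
  shows "openin tau {x. q < (norm (g - A x))\<^sup>2 / (2*\<alpha>)}"
proof -
  define r where "r = (if q < 0 then -1 else sqrt (2*\<alpha>*q))"
  have "{x. q < (norm (g - A x))\<^sup>2 / (2*\<alpha>)} = {x. r < norm (g - A x)}"
  proof (intro Collect_cong iffI)
    fix x assume h: "q < (norm (g - A x))\<^sup>2 / (2*\<alpha>)"
    show "r < norm (g - A x)"
    proof (cases "q < 0")
      case True then show ?thesis by (simp add: r_def) (meson less_le_trans norm_ge_zero zero_less_one neg_less_0_iff_less)
    next
      case False
      have "2*\<alpha>*q < (norm (g - A x))\<^sup>2" using h assms by (simp add: field_simps)
      then have "sqrt (2*\<alpha>*q) < sqrt ((norm (g - A x))\<^sup>2)" by (simp only: real_sqrt_less_iff)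
      then show ?thesis using False by (simp add: r_def)
    qed
  next
    fix x assume h: "r < norm (g - A x)"
    show "q < (norm (g - A x))\<^sup>2 / (2*\<alpha>)"
    proof (cases "q < 0")
      case True then show ?thesis using assms by (simp add: less_le_trans[of q 0])
    next
      case False
      then have "sqrt (2*\<alpha>*q) < norm (g - A x)" using h by (simp add: r_def)
      then have "(sqrt (2*\<alpha>*q))\<^sup>2 < (norm (g - A x))\<^sup>2"
        using False assms by (intro power_strict_mono) auto
      then have "2*\<alpha>*q < (norm (g - A x))\<^sup>2" using False assms by simp
      then show ?thesis using assms by (simp add: field_simps)
    qed
  qed
  then show ?thesis using openN by simp
qed

lemma Rnm: "R x \<noteq> -\<infinity>" using pc by (simp add: proper_convex_def)

lemma Rfin: "x \<in> edom R \<Longrightarrow> R x = ereal (real_of_ereal (R x))"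
  using Rnm[of x] by (cases "R x") (auto simp: edom_def)

lemma Rfin_ex: "x \<in> edom R \<Longrightarrow> \<exists>r. R x = ereal r"
  using Rfin by blast

lemma argmin_ex: "\<exists>m mu. R m = ereal mu \<and> (\<forall>w. ereal mu \<le> R w)"
proof -
  obtain x0 where "R x0 \<noteq> \<infinity>" using pc by (auto simp: proper_convex_def)
  then obtain c0 where c0: "R x0 = ereal c0" using Rnm[of x0] by (cases "R x0") auto
  define K where "K = {x. R x \<le> ereal c0}"
  define \<U> where "\<U> = {{x. R x \<le> ereal r} | r. r \<le> c0 \<and> (\<exists>y. R y \<le> ereal r)}"
  have "K \<inter> \<Inter>\<U> \<noteq> {}"
  proof -
    have "\<forall>C\<in>\<U>. closedin tau C" using closedR by (auto simp: \<U>_def)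
    moreover have "K \<inter> \<Inter>\<F> \<noteq> {}" if F: "finite \<F>" "\<F> \<subseteq> \<U>" for \<F>
    proof (cases "\<F> = {}")
      case True then show ?thesis using c0 by (auto simp: K_def intro!: exI[of _ x0])
    next
      case False
      have "\<forall>F\<in>\<F>. \<exists>r. F = {x. R x \<le> ereal r} \<and> r \<le> c0 \<and> (\<exists>y. R y \<le> ereal r)"
        using F(2) by (auto simp: \<U>_def)
      then obtain rf where rf: "\<And>F. F \<in> \<F> \<Longrightarrow> F = {x. R x \<le> ereal (rf F)} \<and> rf F \<le> c0 \<and> (\<exists>y. R y \<le> ereal (rf F))" by metis
      define mr where "mr = Min (rf ` \<F>)"
      have "mr \<in> rf ` \<F>" unfolding mr_def using F False by simp
      then obtain F0 where F0: "F0 \<in> \<F>" "rf F0 = mr" by auto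
      then obtain y where y: "R y \<le> ereal mr" using rf by metis
      have "y \<in> F" if "F \<in> \<F>" for F
      proof -
        have "mr \<le> rf F" unfolding mr_def using F that by simp
        then show ?thesis using rf[OF that] y order.trans by fastforce
      qed
      moreover have "y \<in> K" using rf[OF F0(1)] F0(2) y unfolding K_def using order.trans by fastforce
      ultimately show ?thesis by blast
    qed
    ultimately show ?thesis using cpt[of c0] unfolding compactin_fip K_def by blast
  qed
  then obtain m where m: "m \<in> K" "m \<in> \<Inter>\<U>" by blast
  have mle: "R m \<le> R w" for w
  proof (cases "R w")
    case (real r)
    show ?thesis
    proof (cases "r \<le> c0")
      case True
      then have "{x. R x \<le> ereal r} \<in> \<U>" using real unfolding \<U>_def by (intro CollectI exI[of _ r]) (auto intro!: exI[of _ w])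
      then show ?thesis using m(2) real by auto
    next
      case False
      then have "ereal c0 \<le> ereal r" by simp
      then show ?thesis using m(1) real by (auto simp: K_def intro: order.trans)
    qed
  next
    case PInf then show ?thesis by simp
  next
    case MInf then show ?thesis using Rnm by simp
  qed
  obtain mu where "R m = ereal mu" using m(1) Rnm[of m] by (cases "R m") (auto simp: K_def)
  then show ?thesis using mle by metis
qed

definition fT :: "real \<Rightarrow> 'b \<Rightarrow> 'a \<Rightarrow> real" where
  "fT \<alpha> g x = (norm (g - A x))\<^sup>2 / (2*\<alpha>) + real_of_ereal (R x)"

lemma Tik_fin: "x \<in> edom R \<Longrightarrow> Tik A R \<alpha> x g = ereal (fT \<alpha> g x)"
proof -
  assume "x \<in> edom R"
  then obtain r where "R x = ereal r" using Rfin_ex by blast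
  then show ?thesis unfolding Tik_def fT_def by simp
qed

lemma Ralpha_iff: "x \<in> Ralpha A R \<alpha> g \<longleftrightarrow> x \<in> edom R \<and> (\<forall>z\<in>edom R. fT \<alpha> g x \<le> fT \<alpha> g z)"
  unfolding Ralpha_def using Tik_fin by auto

lemma arch: "e > 0 \<Longrightarrow> \<exists>N::nat. 1 / (real N + 1) < e"
  using reals_Archimedean[of e] by (auto simp: field_simps)

lemma minimizer_ex:
  assumes "\<alpha> > 0"
  shows "\<exists>x. x \<in> Ralpha A R \<alpha> g"
proof -
  obtain m0 mu where m0: "R m0 = ereal mu" "\<And>w. ereal mu \<le> R w" using argmin_ex by blast
  have m0d: "m0 \<in> edom R" using m0 by (simp add: edom_def)
  define S where "S = fT \<alpha> g ` edom R"
  have Sne: "S \<noteq> {}" using m0d by (auto simp: S_def)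
  have fT_ge: "mu \<le> fT \<alpha> g x" if xd: "x \<in> edom R" for x
  proof -
    obtain r where "R x = ereal r" using Rfin_ex[OF xd] by blast
    then have "mu \<le> real_of_ereal (R x)" using m0(2)[of x] by simp
    moreover have "0 \<le> (norm (g - A x))\<^sup>2 / (2*\<alpha>)" using assms by simp
    ultimately show ?thesis by (simp add: fT_def)
  qed
  have bdd: "bdd_below S" unfolding S_def using fT_ge by (auto intro!: bdd_belowI[of _ mu])
  define I where "I = Inf S"
  have "\<forall>n::nat. \<exists>y\<in>edom R. fT \<alpha> g y < I + 1 / (real n + 1)"
  proof
    fix n :: nat
    have "Inf S < I + 1 / (real n + 1)" unfolding I_def by simp
    then obtain s where "s \<in> S" "s < I + 1 / (real n + 1)" using cInf_lessD[OF Sne] by blast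
    then show "\<exists>y\<in>edom R. fT \<alpha> g y < I + 1 / (real n + 1)" by (auto simp: S_def)
  qed
  then obtain y where y: "\<And>n. y n \<in> edom R" "\<And>n. fT \<alpha> g (y n) < I + 1 / (real n + 1)" by metis
  define c where "c = I + 1"
  have yK: "y n \<in> {x. R x \<le> ereal c}" for n
  proof -
    have "real_of_ereal (R (y n)) \<le> fT \<alpha> g (y n)" using assms by (simp add: fT_def)
    also have "\<dots> < I + 1 / (real n + 1)" by (rule y(2))
    also have "\<dots> \<le> c" unfolding c_def by (simp add: divide_le_eq)
    finally have "real_of_ereal (R (y n)) \<le> c" by simp
    moreover obtain r where "R (y n) = ereal r" using Rfin_ex[OF y(1)[of n]] by blast
    ultimately show ?thesis by simp
  qed
  obtain m where mK: "m \<in> {x. R x \<le> ereal c}"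
    and mcl0: "\<forall>U. openin tau U \<and> m \<in> U \<longrightarrow> (\<forall>N. \<exists>n\<ge>N. y n \<in> U)"
    using cluster_point[where y=y, OF cpt yK] by (elim bexE) assumption
  have mcl: "\<forall>N. \<exists>n\<ge>N. y n \<in> U" if "openin tau U" "m \<in> U" for U
    using mcl0 that by blast
  have md: "m \<in> edom R" using mK by (auto simp: edom_def)
  have fmI: "fT \<alpha> g m \<le> I"
  proof (rule ccontr)
    assume "\<not> fT \<alpha> g m \<le> I"
    define D where "D = fT \<alpha> g m - I"
    have D: "D > 0" using \<open>\<not> fT \<alpha> g m \<le> I\<close> by (simp add: D_def)
    define q1 where "q1 = (norm (g - A m))\<^sup>2 / (2*\<alpha>) - D/3"
    define q2 where "q2 = real_of_ereal (R m) - D/3"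
    define U where "U = {x. q1 < (norm (g - A x))\<^sup>2 / (2*\<alpha>)} \<inter> {x. ereal q2 < R x}"
    have Uo: "openin tau U" unfolding U_def using openSq[OF assms] openR by (simp add: openin_Int)
    obtain rm where rm: "R m = ereal rm" using Rfin_ex[OF md] by blast
    have mU: "m \<in> U" unfolding U_def q1_def q2_def using D rm by simp
    obtain N where N: "1 / (real N + 1) < D/3" using arch[of "D/3"] D by auto
    obtain n where n: "n \<ge> N" "y n \<in> U" using mcl[OF Uo mU] by blast
    obtain ry where ry: "R (y n) = ereal ry" using Rfin_ex[OF y(1)[of n]] by blast
    have "q2 < real_of_ereal (R (y n))" using n(2) ry unfolding U_def by simp
    moreover have "q1 < (norm (g - A (y n)))\<^sup>2 / (2*\<alpha>)" using n(2) unfolding U_def by simp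
    ultimately have "fT \<alpha> g m - 2*D/3 < fT \<alpha> g (y n)" unfolding fT_def q1_def q2_def by simp
    moreover have "1 / (real n + 1) \<le> 1 / (real N + 1)" using n(1) by (simp add: frac_le)
    ultimately show False using y(2)[of n] N D_def by linarith
  qed
  have "m \<in> Ralpha A R \<alpha> g" unfolding Ralpha_iff
  proof (intro conjI ballI md)
    fix z assume "z \<in> edom R"
    then have "I \<le> fT \<alpha> g z" unfolding I_def S_def using bdd[unfolded S_def] by (simp add: cInf_lower)
    then show "fT \<alpha> g m \<le> fT \<alpha> g z" using fmI by simp
  qed
  then show ?thesis by blast
qed

end



context setting begin

lemma rho_fin_I:
  assumes "\<And>a xa. a > 0 \<Longrightarrow> xa \<in> Ralpha A R a (A x) \<Longrightarrow> a powr (-\<nu>) * norm (A x - A xa) \<le> C"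
  shows "x \<in> Kset A R \<nu>"
proof -
  have "rho A R \<nu> x \<le> ennreal C" unfolding rho_def
    by (rule Sup_least) (auto intro!: ennreal_leI assms)
  then show ?thesis unfolding Kset_def
    using ennreal_less_top le_less_trans by (simp add: order_le_less_trans infinity_ennreal_def)
qed

lemma rho_fin_D:
  assumes "x \<in> Kset A R \<nu>"
  shows "\<exists>C. \<forall>a xa. a > 0 \<longrightarrow> xa \<in> Ralpha A R a (A x) \<longrightarrow> a powr (-\<nu>) * norm (A x - A xa) \<le> C"
proof (intro exI allI impI)
  fix a xa assume h: "(a::real) > 0" "xa \<in> Ralpha A R a (A x)"
  have fin: "rho A R \<nu> x < top" using assms by (simp add: Kset_def infinity_ennreal_def)
  have "ennreal (a powr (-\<nu>) * norm (A x - A xa)) \<le> rho A R \<nu> x"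
    unfolding rho_def by (rule Sup_upper) (use h in blast)
  from enn2real_mono[OF this fin] show "a powr (-\<nu>) * norm (A x - A xa) \<le> enn2real (rho A R \<nu> x)"
    by simp
qed

lemma bound_argmin:
  assumes m: "R m = ereal mu" "\<And>w. ereal mu \<le> R w" and a: "a > 0" and xa: "xa \<in> Ralpha A R a g"
  shows "norm (g - A xa) \<le> norm (g - A m)"
proof -
  have md: "m \<in> edom R" using m by (simp add: edom_def)
  have xd: "xa \<in> edom R" and le: "fT a g xa \<le> fT a g m" using xa md by (auto simp: Ralpha_iff)
  obtain r where r: "R xa = ereal r" using Rfin_ex[OF xd] by blast
  have "mu \<le> r" using m(2)[of xa] r by simp
  then have "(norm (g - A xa))\<^sup>2 / (2*a) \<le> (norm (g - A m))\<^sup>2 / (2*a)"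
    using le r m(1) by (simp add: fT_def)
  then have "(norm (g - A xa))\<^sup>2 \<le> (norm (g - A m))\<^sup>2" using a
    by (simp add: divide_le_cancel)
  then show ?thesis by (rule power2_le_imp_le) simp
qed

lemma K0: "x \<in> Kset A R 0"
proof -
  obtain m mu where m: "R m = ereal mu" "\<And>w. ereal mu \<le> R w" using argmin_ex by blast
  show ?thesis
    by (rule rho_fin_I[where C = "norm (A x - A m)"]) (use bound_argmin[OF m] in simp)
qed

lemma Kmono:
  assumes "0 \<le> \<nu>1" "\<nu>1 \<le> \<nu>2" "x \<in> Kset A R \<nu>2"
  shows "x \<in> Kset A R \<nu>1"
proof -
  obtain m mu where m: "R m = ereal mu" "\<And>w. ereal mu \<le> R w" using argmin_ex by blast
  obtain C where C: "\<And>a xa. a > 0 \<Longrightarrow> xa \<in> Ralpha A R a (A x) \<Longrightarrow> a powr (-\<nu>2) * norm (A x - A xa) \<le> C"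
    using rho_fin_D[OF assms(3)] by blast
  show ?thesis
  proof (rule rho_fin_I[where C = "max C (norm (A x - A m))"])
    fix a xa assume a: "(a::real) > 0" and xa: "xa \<in> Ralpha A R a (A x)"
    show "a powr (-\<nu>1) * norm (A x - A xa) \<le> max C (norm (A x - A m))"
    proof (cases "a \<le> 1")
      case True
      have "a powr (-\<nu>1) \<le> a powr (-\<nu>2)" using True a assms by (intro powr_mono') auto
      then have "a powr (-\<nu>1) * norm (A x - A xa) \<le> a powr (-\<nu>2) * norm (A x - A xa)"
        by (intro mult_right_mono) auto
      also have "\<dots> \<le> C" using C[OF a xa] .
      finally show ?thesis by simp
    next
      case False
      have "1 \<le> a powr \<nu>1" using False assms by (intro ge_one_powr_ge_zero) auto
      then have p: "a powr (-\<nu>1) \<le> 1" by (simp add: powr_minus inverse_le_1_iff)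
      have "a powr (-\<nu>1) * norm (A x - A xa) \<le> 1 * norm (A x - A xa)"
        using p by (intro mult_right_mono) auto
      also have "\<dots> \<le> norm (A x - A m)" using bound_argmin[OF m a xa] by simp
      finally show ?thesis by simp
    qed
  qed
qed

end



context setting begin

lemma K_half:
  assumes d: "d \<in> edom R" and k: "A k = 0"
  shows "d + k \<in> Kset A R (1/2)"
proof -
  obtain m mu where m: "R m = ereal mu" "\<And>w. ereal mu \<le> R w" using argmin_ex by blast
  obtain rd where rd: "R d = ereal rd" using Rfin_ex[OF d] by blast
  have Ax: "A (d + k) = A d" using k linear_add[OF lin] by simp
  show ?thesis
  proof (rule rho_fin_I[where C = "sqrt (2*(rd - mu))"])
    fix a xa assume a: "(a::real) > 0" and xa: "xa \<in> Ralpha A R a (A (d + k))"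
    have xd: "xa \<in> edom R" and le: "fT a (A d) xa \<le> fT a (A d) d" using xa d Ax by (auto simp: Ralpha_iff)
    obtain r where r: "R xa = ereal r" using Rfin_ex[OF xd] by blast
    have "mu \<le> r" using m(2)[of xa] r by simp
    define n where "n = norm (A d - A xa)"
    have "n\<^sup>2 / (2*a) \<le> rd - mu" using le r rd \<open>mu \<le> r\<close> by (simp add: fT_def n_def)
    then have "n\<^sup>2 \<le> a * (2*(rd - mu))" using a by (simp add: divide_le_eq mult.commute mult.left_commute)
    then have "n \<le> sqrt (a * (2*(rd - mu)))" by (rule real_le_rsqrt)
    also have "\<dots> = sqrt a * sqrt (2*(rd - mu))" by (simp add: real_sqrt_mult)
    finally have "n / sqrt a \<le> sqrt (2*(rd - mu))" using a by (simp add: divide_le_eq mult.commute)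
    moreover have "a powr (-(1/2)) = 1 / sqrt a" using a by (simp add: powr_minus_divide powr_half_sqrt)
    ultimately show "a powr (-(1/2)) * norm (A (d + k) - A xa) \<le> sqrt (2*(rd - mu))"
      using Ax by (simp add: n_def)
  qed
qed

lemma K_argmin:
  assumes m: "m \<in> argminR R" and k: "A k = 0"
  shows "m + k \<in> Kset A R \<nu>"
proof -
  have Ax: "A (m + k) = A m" using k linear_add[OF lin] by simp
  obtain m0 mu where m0: "R m0 = ereal mu" "\<And>w. ereal mu \<le> R w" using argmin_ex by blast
  have "R m \<le> R m0" using m by (simp add: argminR_def)
  then have md: "m \<in> edom R" using m0 by (auto simp: edom_def)
  obtain rm where rm: "R m = ereal rm" using Rfin_ex[OF md] by blast
  show ?thesis
  proof (rule rho_fin_I[where C = 0])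
    fix a xa assume a: "(a::real) > 0" and xa: "xa \<in> Ralpha A R a (A (m + k))"
    have xd: "xa \<in> edom R" and le: "fT a (A m) xa \<le> fT a (A m) m" using xa md Ax by (auto simp: Ralpha_iff)
    obtain r where r: "R xa = ereal r" using Rfin_ex[OF xd] by blast
    have "rm \<le> r" using m r rm by (simp add: argminR_def) (metis ereal_less_eq(3))
    then have "(norm (A m - A xa))\<^sup>2 / (2*a) \<le> 0" using le r rm by (simp add: fT_def)
    then have "(norm (A m - A xa))\<^sup>2 \<le> 0" using a by (simp add: divide_le_0_iff)
    then have "norm (A m - A xa) = 0" by simp
    then show "a powr (-\<nu>) * norm (A (m + k) - A xa) \<le> 0" using Ax by simp
  qed
qed

end



context setting begin

lemma foc:
  assumes a: "a > 0" and xa: "xa \<in> Ralpha A R a g" and z: "z \<in> edom R" and t: "0 < t" "t \<le> 1"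
  shows "real_of_ereal (R xa) \<le> real_of_ereal (R z) - ((g - A xa) \<bullet> (A z - A xa)) / a
           + t * (norm (A z - A xa))\<^sup>2 / (2*a)"
proof -
  define u where "u = g - A xa"
  define v where "v = A z - A xa"
  have xd: "xa \<in> edom R" and le: "\<And>w. w \<in> edom R \<Longrightarrow> fT a g xa \<le> fT a g w"
    using xa by (auto simp: Ralpha_iff)
  obtain rx where rx: "R xa = ereal rx" using Rfin_ex[OF xd] by blast
  obtain rz where rz: "R z = ereal rz" using Rfin_ex[OF z] by blast
  define w where "w = (1 - t) *\<^sub>R xa + t *\<^sub>R z"
  have "R w \<le> ereal (1 - t) * R xa + ereal t * R z"
    using pc t unfolding proper_convex_def w_def by auto
  then have Rw: "R w \<le> ereal ((1 - t) * rx + t * rz)" using rx rz by simp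
  then have wd: "w \<in> edom R" by (auto simp: edom_def)
  obtain rw where rw: "R w = ereal rw" using Rfin_ex[OF wd] by blast
  have rwle: "rw \<le> (1 - t) * rx + t * rz" using Rw rw by simp
  have Aw: "A w = (1 - t) *\<^sub>R A xa + t *\<^sub>R A z"
    unfolding w_def using lin by (simp add: linear_add linear_scale)
  have gAw: "g - A w = u - t *\<^sub>R v" unfolding Aw u_def v_def by (simp add: algebra_simps)
  have nsq: "(norm (u - t *\<^sub>R v))\<^sup>2 = (norm u)\<^sup>2 - 2 * t * (u \<bullet> v) + t\<^sup>2 * (norm v)\<^sup>2"
    unfolding power2_norm_eq_inner
    by (simp add: inner_diff_left inner_diff_right inner_commute algebra_simps power2_eq_square)
  have "fT a g xa \<le> fT a g w" using le[OF wd] .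
  then have "(norm u)\<^sup>2 / (2*a) + rx \<le> ((norm u)\<^sup>2 - 2 * t * (u \<bullet> v) + t\<^sup>2 * (norm v)\<^sup>2) / (2*a) + rw"
    using rx rw gAw nsq by (simp add: fT_def u_def)
  then have "(norm u)\<^sup>2 / (2*a) + rx \<le> ((norm u)\<^sup>2 - 2 * t * (u \<bullet> v) + t\<^sup>2 * (norm v)\<^sup>2) / (2*a) + (1 - t) * rx + t * rz"
    using rwle by linarith
  then have "t * rx \<le> t * (rz - (u \<bullet> v) / a + t * (norm v)\<^sup>2 / (2*a))"
    using a by (simp add: field_simps power2_eq_square)
  then have "rx \<le> rz - (u \<bullet> v) / a + t * (norm v)\<^sup>2 / (2*a)"
    using t by (simp add: mult_le_cancel_left)
  then show ?thesis using rx rz by (simp add: u_def v_def)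
qed

end



lemma small_powr:
  assumes p: "p > 0" and e: "(e::real) > 0"
  shows "\<exists>N. \<forall>n\<ge>N. (1 / (real n + 1)) powr p < e"
proof -
  define e' where "e' = e powr (1/p)"
  have e': "e' > 0" using e by (simp add: e'_def)
  obtain N where N: "1 / (real N + 1) < e'" using reals_Archimedean[OF e'] by (auto simp: field_simps)
  show ?thesis
  proof (intro exI allI impI)
    fix n assume n: "N \<le> n"
    have "1 / (real n + 1) \<le> 1 / (real N + 1)" using n by (simp add: frac_le)
    then have "1 / (real n + 1) < e'" using N by linarith
    then have "(1 / (real n + 1)) powr p < e' powr p" using p by (intro powr_less_mono2) auto
    also have "e' powr p = e" using p e by (simp add: e'_def powr_powr)
    finally show "(1 / (real n + 1)) powr p < e" .
  qed
qed

context setting begin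

lemma K_sub:
  assumes nu: "\<nu> > 1" and x: "x \<in> Kset A R \<nu>"
  shows "\<exists>m k. x = m + k \<and> m \<in> argminR R \<and> k \<in> kerA A"
proof -
  obtain C0 where C0: "\<And>a xa. a > 0 \<Longrightarrow> xa \<in> Ralpha A R a (A x) \<Longrightarrow> a powr (-\<nu>) * norm (A x - A xa) \<le> C0"
    using rho_fin_D[OF x] by blast
  define C where "C = max C0 0"
  have C0': "C \<ge> 0" by (simp add: C_def)
  define a where "a = (\<lambda>n::nat. 1 / (real n + 1))"
  have apos: "a n > 0" for n by (simp add: a_def)
  have ale1: "a n \<le> 1" for n by (simp add: a_def)
  have "\<forall>n. \<exists>y. y \<in> Ralpha A R (a n) (A x)" using minimizer_ex apos by blast
  then obtain y where y: "\<And>n. y n \<in> Ralpha A R (a n) (A x)" by metis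
  have yd: "y n \<in> edom R" for n using y[of n] by (simp add: Ralpha_iff)
  define p where "p = \<nu> - 1"
  have p: "p > 0" using nu by (simp add: p_def)
  have F1: "norm (A x - A (y n)) \<le> C * a n powr \<nu>" for n
  proof -
    have "a n powr (-\<nu>) * norm (A x - A (y n)) \<le> C" using C0[OF apos y, of n] unfolding C_def by linarith
    then have "a n powr \<nu> * (a n powr (-\<nu>) * norm (A x - A (y n))) \<le> a n powr \<nu> * C"
      by (intro mult_left_mono) auto
    moreover have "a n powr \<nu> * a n powr (-\<nu>) = 1" using apos[of n]
      by (simp add: powr_minus)
    ultimately show ?thesis by (simp add: mult.assoc[symmetric] mult.commute)
  qed
  have F2: "a n powr \<nu> \<le> a n" for n
    using powr_mono'[of 1 \<nu> "a n"] nu apos[of n] ale1[of n] by simp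
  have F1': "norm (A x - A (y n)) \<le> C * a n" for n
    using F1[of n] F2[of n] C0' by (meson mult_left_mono order.trans)
  have F1'': "norm (A x - A (y n)) \<le> C" for n
    using F1'[of n] ale1[of n] C0' by (meson mult_left_le order.trans)
  define V where "V = (\<lambda>z. norm (A z - A x) + C)"
  have F3: "norm (A z - A (y n)) \<le> V z" for z n
  proof -
    have "norm (A z - A (y n)) \<le> norm (A z - A x) + norm (A x - A (y n))"
      using norm_triangle_ineq[of "A z - A x" "A x - A (y n)"] by simp
    then show ?thesis using F1''[of n] by (simp add: V_def)
  qed
  define E where "E = (\<lambda>n z. a n powr p * (C * V z + (V z)\<^sup>2 / 2))"
  have F4: "real_of_ereal (R (y n)) \<le> real_of_ereal (R z) + E n z" if z: "z \<in> edom R" for n z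
  proof -
    define t where "t = a n powr \<nu>"
    have t: "0 < t" "t \<le> 1" using apos[of n] F2[of n] ale1[of n] by (auto simp: t_def)
    define u where "u = A x - A (y n)"
    define v where "v = A z - A (y n)"
    have "real_of_ereal (R (y n)) \<le> real_of_ereal (R z) - (u \<bullet> v) / a n + t * (norm v)\<^sup>2 / (2 * a n)"
      using foc[OF apos y z t] by (simp add: u_def v_def)
    moreover have "- (u \<bullet> v) \<le> norm u * norm v"
      using norm_cauchy_schwarz[of "-u" v] by simp
    moreover have "norm u * norm v \<le> (C * t) * V z"
      using F1[of n] F3[of z n] by (intro mult_mono) (auto simp: u_def v_def t_def C0')
    moreover have "(norm v)\<^sup>2 \<le> (V z)\<^sup>2"
      using F3[of z n] by (intro power_mono) (auto simp: v_def)
    ultimately have "real_of_ereal (R (y n)) \<le> real_of_ereal (R z) + (C * t) * V z / a n + t * (V z)\<^sup>2 / (2 * a n)"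
    proof -
      assume h1: "real_of_ereal (R (y n)) \<le> real_of_ereal (R z) - (u \<bullet> v) / a n + t * (norm v)\<^sup>2 / (2 * a n)"
        and h2: "- (u \<bullet> v) \<le> norm u * norm v" and h3: "norm u * norm v \<le> (C * t) * V z"
        and h4: "(norm v)\<^sup>2 \<le> (V z)\<^sup>2"
      have "- (u \<bullet> v) / a n \<le> (C * t) * V z / a n" using h2 h3 apos[of n] by (intro divide_right_mono) auto
      moreover have "t * (norm v)\<^sup>2 / (2 * a n) \<le> t * (V z)\<^sup>2 / (2 * a n)"
        using h4 t apos[of n] by (intro divide_right_mono mult_left_mono) auto
      ultimately show ?thesis using h1 by linarith
    qed
    moreover have "t / a n = a n powr p"
      using apos[of n] by (simp add: t_def p_def powr_diff)
    ultimately have ineq: "real_of_ereal (R (y n)) \<le> real_of_ereal (R z) + (C * t) * V z / a n + t * (V z)\<^sup>2 / (2 * a n)"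
      and tq: "t / a n = a n powr p" by blast+
    have e1: "(C * t) * V z / a n = C * V z * a n powr p" using tq[symmetric] by simp
    have e2: "t * (V z)\<^sup>2 / (2 * a n) = a n powr p * (V z)\<^sup>2 / 2" using tq[symmetric] by simp
    have e3: "E n z = C * V z * a n powr p + a n powr p * (V z)\<^sup>2 / 2" by (simp add: E_def algebra_simps)
    show ?thesis using ineq e1 e2 e3 by linarith
  qed
  obtain m0 mu where m0: "R m0 = ereal mu" "\<And>w. ereal mu \<le> R w" using argmin_ex by blast
  have m0d: "m0 \<in> edom R" using m0 by (simp add: edom_def)
  define c where "c = mu + (C * V m0 + (V m0)\<^sup>2 / 2)"
  have yK: "y n \<in> {w. R w \<le> ereal c}" for n
  proof -
    have "a n powr p \<le> 1" using apos[of n] ale1[of n] p by (intro powr_le1) auto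
    then have "E n m0 \<le> C * V m0 + (V m0)\<^sup>2 / 2" unfolding E_def
      by (intro mult_left_le_one_le) (auto simp: V_def C0')
    then have "real_of_ereal (R (y n)) \<le> c" using F4[OF m0d, of n] m0 by (simp add: c_def)
    moreover obtain r where "R (y n) = ereal r" using Rfin_ex[OF yd] by blast
    ultimately show ?thesis by simp
  qed
  obtain m where mK: "m \<in> {w. R w \<le> ereal c}"
    and mcl0: "\<forall>U. openin tau U \<and> m \<in> U \<longrightarrow> (\<forall>N. \<exists>n\<ge>N. y n \<in> U)"
    using cluster_point[where y=y, OF cpt yK] by (elim bexE) assumption
  have mcl: "\<forall>N. \<exists>n\<ge>N. y n \<in> U" if "openin tau U" "m \<in> U" for U
    using mcl0 that by blast
  have md: "m \<in> edom R" using mK by (auto simp: edom_def)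
  obtain rm where rm: "R m = ereal rm" using Rfin_ex[OF md] by blast
  have G1: "A m = A x"
  proof (rule ccontr)
    assume "A m \<noteq> A x"
    define r where "r = norm (A x - A m)"
    have r: "r > 0" using \<open>A m \<noteq> A x\<close> by (simp add: r_def)
    define U where "U = {w. r/2 < norm (A x - A w)}"
    have Uo: "openin tau U" unfolding U_def by (rule openN)
    have mU: "m \<in> U" using r by (simp add: U_def r_def)
    obtain N where N: "\<forall>n\<ge>N. (1 / (real n + 1)) powr 1 < r / (2 * (C + 1))"
      using small_powr[of 1 "r / (2 * (C + 1))"] r C0' by auto
    obtain n where n: "n \<ge> N" "y n \<in> U" using mcl[OF Uo mU] by blast
    have "a n < r / (2 * (C + 1))" using N n(1) by (simp add: a_def)
    then have "(C + 1) * a n < r / 2" using C0' by (simp add: field_simps)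
    moreover have "C * a n \<le> (C + 1) * a n" using apos[of n] by (simp add: distrib_right)
    ultimately have "norm (A x - A (y n)) < r / 2" using F1'[of n] by linarith
    then show False using n(2) by (simp add: U_def)
  qed
  have G2: "m \<in> argminR R"
    unfolding argminR_def
  proof (intro CollectI allI)
    fix w
    show "R m \<le> R w"
    proof (rule ccontr)
      assume "\<not> R m \<le> R w"
      then have lt: "R w < ereal rm" using rm by simp
      then have wd: "w \<in> edom R" by (auto simp: edom_def)
      obtain rw where rw: "R w = ereal rw" using Rfin_ex[OF wd] by blast
      define \<delta> where "\<delta> = (rm - rw) / 2"
      have \<delta>: "\<delta> > 0" using lt rw by (simp add: \<delta>_def)
      define U where "U = {x. ereal (rw + \<delta>) < R x}"
      have Uo: "openin tau U" unfolding U_def by (rule openR)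
      have "rw < rm" using lt rw by simp
      then have "rw + \<delta> < rm" unfolding \<delta>_def by (simp add: field_simps)
      then have mU: "m \<in> U" using rm by (simp add: U_def)
      define B where "B = C * V w + (V w)\<^sup>2 / 2"
      have B: "B \<ge> 0" by (simp add: B_def V_def C0')
      obtain N where N: "\<forall>n\<ge>N. (1 / (real n + 1)) powr p < \<delta> / (B + 1)"
        using small_powr[OF p, of "\<delta> / (B + 1)"] \<delta> B by auto
      obtain n where n: "n \<ge> N" "y n \<in> U" using mcl[OF Uo mU] by blast
      have "a n powr p < \<delta> / (B + 1)" using N n(1) by (simp add: a_def)
      then have "a n powr p * (B + 1) < \<delta>" using B by (simp add: field_simps)
      moreover have "a n powr p * B \<le> a n powr p * (B + 1)" by (intro mult_left_mono) auto
      ultimately have "E n w < \<delta>" by (simp add: E_def B_def)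
      then have "real_of_ereal (R (y n)) < rw + \<delta>" using F4[OF wd, of n] rw by simp
      moreover obtain ry where "R (y n) = ereal ry" using Rfin_ex[OF yd] by blast
      ultimately show False using n(2) by (simp add: U_def)
    qed
  qed
  have "x - m \<in> kerA A" using G1 lin by (simp add: kerA_def linear_diff)
  then show ?thesis using G2 by (intro exI[of _ m] exI[of _ "x - m"]) simp
qed

end


theorem lemma3p6:
  fixes tau :: "'a::banach topology"
    and R :: "'a \<Rightarrow> ereal"
    and A :: "'a \<Rightarrow> 'b::{real_inner, complete_space}"
  assumes "locally_convex_Hausdorff tau"
    and "proper_convex R"
    and "\<And>c::real. compactin tau {x. R x \<le> ereal c}"
    and "linear A"
    and "continuous_map tau weak_topology A"
  shows "Kset A R 0 = UNIV
    \<and> (\<forall>\<nu>1 \<nu>2. 0 \<le> \<nu>1 \<and> \<nu>1 \<le> \<nu>2 \<longrightarrow> Kset A R \<nu>2 \<subseteq> Kset A R \<nu>1)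
    \<and> (\<forall>\<nu>>1. Kset A R \<nu> = {m + k | m k. m \<in> argminR R \<and> k \<in> kerA A})
    \<and> {d + k | d k. d \<in> edom R \<and> k \<in> kerA A} \<subseteq> Kset A R (1/2)"
proof -
  interpret setting tau R A by (rule setting.intro) (fact assms)+
  have c1: "Kset A R 0 = UNIV" using K0 by blast
  have c2: "\<forall>\<nu>1 \<nu>2. 0 \<le> \<nu>1 \<and> \<nu>1 \<le> \<nu>2 \<longrightarrow> Kset A R \<nu>2 \<subseteq> Kset A R \<nu>1"
    using Kmono by blast
  have c3: "\<forall>\<nu>>1. Kset A R \<nu> = {m + k | m k. m \<in> argminR R \<and> k \<in> kerA A}"
  proof (intro allI impI)
    fix \<nu> :: real assume nu: "\<nu> > 1"
    show "Kset A R \<nu> = {m + k | m k. m \<in> argminR R \<and> k \<in> kerA A}"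
    proof
      show "Kset A R \<nu> \<subseteq> {m + k | m k. m \<in> argminR R \<and> k \<in> kerA A}"
        using K_sub[OF nu] by blast
      show "{m + k | m k. m \<in> argminR R \<and> k \<in> kerA A} \<subseteq> Kset A R \<nu>"
        using K_argmin by (auto simp: kerA_def)
    qed
  qed
  have c4: "{d + k | d k. d \<in> edom R \<and> k \<in> kerA A} \<subseteq> Kset A R (1/2)"
    using K_half by (auto simp: kerA_def)
  show ?thesis using c1 c2 c3 c4 by blast
qed

end
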